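(* Let $n=3$, $s_0,s_1,s_2,b_0,b_1,b_2\in\mathbb{R}$, $S=s_0+s_1+s_2$, and assume (C1)–(C21) hold. Then the conjunction of the rules (R1), (R2$_0$) and (R3$_0$) is equivalent to the conjunction of the following statements: (i) If $b_0=\frac12$, then (C4), (C8), (C10), (C11) are strict. (ii) If $b_1=\frac12$, then (C3), (C7), (C9), (C11) are strict. (iii) If $b_2=\frac12$, then (C2), (C6), (C9), (C10) are strict. (iv) If $b_0+b_1=1$, or $b_0+b_2=1$, or $b_1+b_2=1$, or $b_0+b_1+b_2=1$, then (C5) is strict. (v) If $b_0+b_1=\frac12$ then (C6) is strict; if $b_0+b_2=\frac12$ then (C7) is strict; if $b_1+b_2=\frac12$ then (C8) is strict. (vi) If $s_0-b_0$ equals one of $\frac52-2(b_0+b_1+b_2)$, $\frac32-2(b_0+b_1)$, $\frac32-2(b_0+b_2)$, $\frac12-2b_0$, $\frac12$, $\frac32-2b_0$, then (C13) is strict. (vii) If one of (C5)–(C12) is an equality, then (C16) and (C19) are strict.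
   Context: Conditions, with $S=s_0+s_1+s_2$: (C1) $b_0+b_1+b_2\ge\frac12$; (C2) $b_0+b_1\ge0$; (C3) $b_0+b_2\ge0$; (C4) $b_1+b_2\ge0$; (C5) $S\ge 2-(b_0+b_1+b_2)$; (C6) $S\ge\frac32-(b_0+b_1)$; (C7) $S\ge\frac32-(b_0+b_2)$; (C8) $S\ge\frac32-(b_1+b_2)$; (C9) $S\ge1-b_0$; (C10) $S\ge1-b_1$; (C11) $S\ge 1-b_2$; (C12) $S\ge1$; (C13) $s_0+b_0+2s_1+2s_2\ge\frac32$; (C14) $2s_0+s_1+b_1+2s_2\ge\frac32$; (C15) $2s_0+2s_1+s_2+b_2\ge\frac32$; (C16) $s_1+s_2\ge-b_0$; (C17) $s_0+s_2\ge-b_1$; (C18) $s_0+s_1\ge-b_2$; (C19) $s_1+s_2\ge0$; (C20) $s_0+s_2\ge0$; (C21) $s_0+s_1\ge0$. "Strict" means the inequality holds with $>$. Rules: (R1) It is not the case that both $b_0+b_1+b_2=\tfrac12$ and $b_0+b_1+b_2=\max(b_0,b_1,b_2)$. (R2$_0$) At most one of the following is an equality: (E1) $S\ge 2-(b_0+b_1+b_2)$; (E2) $S\ge \tfrac32+\max(-b_0-b_1,-b_0-b_2,-b_1-b_2)$; (E3) $S\ge 1+\max(-b_0,-b_1,-b_2,0)$; (E4$_0$) $S\ge s_0+\max(0,-b_0)$. (R3$_0$) At most one of the following is an equality: (E1), (E2), (E3), (E5$_0$) $S\ge \tfrac34+\tfrac{s_0-b_0}{2}$, (E6$_0$) $S\ge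 s_0$. *)

theory Defs
  imports Main "HOL.Real"
begin

definition at_most_one :: "bool list \<Rightarrow> bool" where
  "at_most_one xs \<longleftrightarrow> length (filter id xs) \<le> 1"

definition R1 :: "real \<Rightarrow> real \<Rightarrow> real \<Rightarrow> bool" where
  "R1 b0 b1 b2 \<longleftrightarrow>
     \<not> (b0 + b1 + b2 = 1/2 \<and> b0 + b1 + b2 = max b0 (max b1 b2))"

definition E1_eq :: "real \<Rightarrow> real \<Rightarrow> real \<Rightarrow> real \<Rightarrow> bool" where
  "E1_eq S b0 b1 b2 \<longleftrightarrow> S = 2 - (b0 + b1 + b2)"

definition E2_eq :: "real \<Rightarrow> real \<Rightarrow> real \<Rightarrow> real \<Rightarrow> bool" where
  "E2_eq S b0 b1 b2 \<longleftrightarrow> S = 3/2 + max (- b0 - b1) (max (- b0 - b2) (- b1 - b2))"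

definition E3_eq :: "real \<Rightarrow> real \<Rightarrow> real \<Rightarrow> real \<Rightarrow> bool" where
  "E3_eq S b0 b1 b2 \<longleftrightarrow> S = 1 + max (- b0) (max (- b1) (max (- b2) 0))"

text \<open>Rule (R2_0): at most one of (E1),(E2),(E3),(E4_0) is an equality.\<close>
definition R2_0 :: "real \<Rightarrow> real \<Rightarrow> real \<Rightarrow> real \<Rightarrow> real \<Rightarrow> real \<Rightarrow> bool" where
  "R2_0 s0 s1 s2 b0 b1 b2 \<longleftrightarrow>
     (let S = s0 + s1 + s2 in
      at_most_one [E1_eq S b0 b1 b2, E2_eq S b0 b1 b2, E3_eq S b0 b1 b2,
                   S = s0 + max 0 (- b0)])"

text \<open>Rule (R3_0): at most one of (E1),(E2),(E3),(E5_0),(E6_0) is an equality.\<close>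
definition R3_0 :: "real \<Rightarrow> real \<Rightarrow> real \<Rightarrow> real \<Rightarrow> real \<Rightarrow> real \<Rightarrow> bool" where
  "R3_0 s0 s1 s2 b0 b1 b2 \<longleftrightarrow>
     (let S = s0 + s1 + s2 in
      at_most_one [E1_eq S b0 b1 b2, E2_eq S b0 b1 b2, E3_eq S b0 b1 b2,
                   S = 3/4 + (s0 - b0) / 2, S = s0])"

end

theory Submission
  imports Defs
begin

lemma amo4: "at_most_one [a,b,c,d] \<longleftrightarrow> \<not>(a\<and>b) \<and> \<not>(a\<and>c) \<and> \<not>(a\<and>d) \<and> \<not>(b\<and>c) \<and> \<not>(b\<and>d) \<and> \<not>(c\<and>d)"
  by (cases a; cases b; cases c; cases d) (auto simp: at_most_one_def)

lemma amo5: "at_most_one [a,b,c,d,e] \<longleftrightarrow> \<not>(a\<and>b) \<and> \<not>(a\<and>c) \<and> \<not>(a\<and>d) \<and> \<not>(a\<and>e) \<and> \<not>(b\<and>c) \<and> \<not>(b\<and>d) \<and> \<not>(b\<and>e) \<and> \<not>(c\<and>d) \<and> \<not>(c\<and>e) \<and> \<not>(d\<and>e)"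
  by (cases a; cases b; cases c; cases d; cases e) (auto simp: at_most_one_def)

declare [[smt_timeout=120]]

theorem theorem3:
  fixes s0 s1 s2 b0 b1 b2 :: real
  assumes C1: "b0 + b1 + b2 \<ge> 1/2"
    and C2: "b0 + b1 \<ge> 0"
    and C3: "b0 + b2 \<ge> 0"
    and C4: "b1 + b2 \<ge> 0"
    and C5: "s0 + s1 + s2 \<ge> 2 - (b0 + b1 + b2)"
    and C6: "s0 + s1 + s2 \<ge> 3/2 - (b0 + b1)"
    and C7: "s0 + s1 + s2 \<ge> 3/2 - (b0 + b2)"
    and C8: "s0 + s1 + s2 \<ge> 3/2 - (b1 + b2)"
    and C9: "s0 + s1 + s2 \<ge> 1 - b0"
    and C10: "s0 + s1 + s2 \<ge> 1 - b1"
    and C11: "s0 + s1 + s2 \<ge> 1 - b2"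
    and C12: "s0 + s1 + s2 \<ge> 1"
    and C13: "s0 + b0 + 2 * s1 + 2 * s2 \<ge> 3/2"
    and C14: "2 * s0 + s1 + b1 + 2 * s2 \<ge> 3/2"
    and C15: "2 * s0 + 2 * s1 + s2 + b2 \<ge> 3/2"
    and C16: "s1 + s2 \<ge> - b0"
    and C17: "s0 + s2 \<ge> - b1"
    and C18: "s0 + s1 \<ge> - b2"
    and C19: "s1 + s2 \<ge> 0"
    and C20: "s0 + s2 \<ge> 0"
    and C21: "s0 + s1 \<ge> 0"
  shows "(R1 b0 b1 b2 \<and> R2_0 s0 s1 s2 b0 b1 b2 \<and> R3_0 s0 s1 s2 b0 b1 b2) \<longleftrightarrow>
    ((b0 = 1/2 \<longrightarrow>
        b1 + b2 > 0 \<and> s0 + s1 + s2 > 3/2 - (b1 + b2)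
        \<and> s0 + s1 + s2 > 1 - b1 \<and> s0 + s1 + s2 > 1 - b2) \<and>
     (b1 = 1/2 \<longrightarrow>
        b0 + b2 > 0 \<and> s0 + s1 + s2 > 3/2 - (b0 + b2)
        \<and> s0 + s1 + s2 > 1 - b0 \<and> s0 + s1 + s2 > 1 - b2) \<and>
     (b2 = 1/2 \<longrightarrow>
        b0 + b1 > 0 \<and> s0 + s1 + s2 > 3/2 - (b0 + b1)
        \<and> s0 + s1 + s2 > 1 - b0 \<and> s0 + s1 + s2 > 1 - b1) \<and>
     ((b0 + b1 = 1 \<or> b0 + b2 = 1 \<or> b1 + b2 = 1 \<or> b0 + b1 + b2 = 1) \<longrightarrow>
        s0 + s1 + s2 > 2 - (b0 + b1 + b2)) \<and>
     ((b0 + b1 = 1/2 \<longrightarrow> s0 + s1 + s2 > 3/2 - (b0 + b1)) \<and>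
      (b0 + b2 = 1/2 \<longrightarrow> s0 + s1 + s2 > 3/2 - (b0 + b2)) \<and>
      (b1 + b2 = 1/2 \<longrightarrow> s0 + s1 + s2 > 3/2 - (b1 + b2))) \<and>
     ((s0 - b0 = 5/2 - 2 * (b0 + b1 + b2) \<or> s0 - b0 = 3/2 - 2 * (b0 + b1)
       \<or> s0 - b0 = 3/2 - 2 * (b0 + b2) \<or> s0 - b0 = 1/2 - 2 * b0
       \<or> s0 - b0 = 1/2 \<or> s0 - b0 = 3/2 - 2 * b0) \<longrightarrow>
        s0 + b0 + 2 * s1 + 2 * s2 > 3/2) \<and>
     ((s0 + s1 + s2 = 2 - (b0 + b1 + b2) \<or> s0 + s1 + s2 = 3/2 - (b0 + b1)
       \<or> s0 + s1 + s2 = 3/2 - (b0 + b2) \<or> s0 + s1 + s2 = 3/2 - (b1 + b2)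
       \<or> s0 + s1 + s2 = 1 - b0 \<or> s0 + s1 + s2 = 1 - b1
       \<or> s0 + s1 + s2 = 1 - b2 \<or> s0 + s1 + s2 = 1) \<longrightarrow>
        s1 + s2 > - b0 \<and> s1 + s2 > 0))"
proof -
  define M where "M = max b0 (max b1 b2)"
  define m where "m = min b0 (min b1 b2)"
  define p where "p = max 0 (- b0)"
  define q where "q = max 0 (- m)"
  have e2: "max (- b0 - b1) (max (- b0 - b2) (- b1 - b2)) = M - (b0+b1+b2)" unfolding M_def by linarith
  have e3: "max (- b0) (max (- b1) (max (- b2) 0)) = q" unfolding q_def m_def by linarith
  have hM: "M \<ge> b0" "M \<ge> b1" "M \<ge> b2" "M = b0 \<or> M = b1 \<or> M = b2" unfolding M_def by linarith+
  have hm: "m \<le> b0" "m \<le> b1" "m \<le> b2" "m = b0 \<or> m = b1 \<or> m = b2" unfolding m_def by linarith+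
  have hp: "p \<ge> 0" "p \<ge> -b0" "p = 0 \<or> p = -b0" unfolding p_def by linarith+
  have hq: "q \<ge> 0" "q \<ge> -m" "q = 0 \<or> q = -m" unfolding q_def by linarith+
  have e5: "(s0+s1+s2 = 3/4 + (s0 - b0) / 2) \<longleftrightarrow> (2*(s0+s1+s2) = 3/2 + s0 - b0)" by (auto simp: field_simps)
  define h :: real where "h = 1/2"
  have hh: "2*h = 1" unfolding h_def by simp
  have f1: "(1/2::real) = h" "(3/2::real) = 3*h" "(5/2::real) = 5*h" unfolding h_def by simp_all
  show ?thesis
  using assms hM hm hp hq
  unfolding R1_def R2_0_def R3_0_def Let_def amo4 amo5 E1_eq_def E2_eq_def E3_eq_def e2 e3 e5 p_def[symmetric] M_def[symmetric] f1
  apply -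
  apply (rule iffI)
  subgoal using hh apply (smt (z3)) done
  subgoal using hh apply (smt (z3)) done
  done
qed
end
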